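(* Consider the RIS-assisted localization model described in the context, with fixed known AoDs $(\theta_i,\phi_i)$, propagation gains $h_i\in\mathbb{C}$, RIS phase shifts $\varrho_i\in[0,2\pi]$, pilot vectors $\boldsymbol{x}(1),\dots,\boldsymbol{x}(L)\in\mathbb{C}^{N_{\mathrm{t}}}$ and noise variance $\sigma^2>0$, and let $\mathbf{J}_{\boldsymbol{q}}=\mathbf{T}\mathbf{J}_{\boldsymbol{\eta}}\mathbf{T}^{\mathrm{T}}\in\mathbb{R}^{2\times 2}$ be the Fisher information matrix of the MS position $\boldsymbol{q}_{1:2}=[q_x,q_y]^{\mathrm{T}}$ (assumed nonsingular). Then for $a,b\in\{1,2\}$, $$[\mathbf{J}_{\boldsymbol{q}}]_{a,b}=\sum_{l=1}^{L}\frac{2}{\sigma^2}\sum_{m=1}^{N}\sum_{n=1}^{N}\mathfrak{Re}\Big[e^{j(\varrho_n-\varrho_m)}\kappa^{a,b}_{m,n}(l)\Big],$$ where, writing $u^1=x$, $u^2=y$, $$\kappa^{a,b}_{m,n}(l)=\alpha_m^{u^a}\alpha_n^{u^b}\dot{\boldsymbol{\varpi}}_m^{\mathrm{H}}(l)\dot{\boldsymbol{\varpi}}_n(l)+\beta_m^{u^a}\alpha_n^{u^b}\ddot{\boldsymbol{\varpi}}_m^{\mathrm{H}}(l)\dot{\boldsymbol{\varpi}}_n(l)+\alpha_m^{u^a}\beta_n^{u^b}\dot{\boldsymbol{\varpi}}_m^{\mathrm{H}}(l)\ddot{\boldsymbol{\varpi}}_n(l)+\beta_m^{u^a}\beta_n^{u^b}\ddot{\boldsymbol{\varpi}}_m^{\mathrm{H}}(l)\ddot{\boldsymbol{\varpi}}_n(l),$$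 and consequently the Cramér–Rao lower bound for the estimate of the absolute MS position is $$\mathrm{CRLB}=\mathrm{Tr}\big(\mathbf{J}_{\boldsymbol{q}}^{-1}\big)=\frac{[\mathbf{J}_{\boldsymbol{q}}]_{1,1}+[\mathbf{J}_{\boldsymbol{q}}]_{2,2}}{[\mathbf{J}_{\boldsymbol{q}}]_{1,1}[\mathbf{J}_{\boldsymbol{q}}]_{2,2}-[\mathbf{J}_{\boldsymbol{q}}]_{1,2}[\mathbf{J}_{\boldsymbol{q}}]_{2,1}}.$$
   Context: Setting: a base station (BS) with $N_{\mathrm{t}}$ antennas at known position $\boldsymbol{p}=[p_x,p_y,0]^{\mathrm{T}}$, a mobile station (MS) with $N_{\mathrm{r}}$ antennas at unknown position $\boldsymbol{q}=[q_x,q_y,0]^{\mathrm{T}}$, and a reconfigurable intelligent surface (RIS) with $N$ reflecting elements at known positions $\boldsymbol{s}^i=[s^i_x,s^i_y,s^i_z]^{\mathrm{T}}$, $s^i_z>0$, $i=1,\dots,N$; the line of sight is blocked, so there are exactly $N$ paths, path $i$ going through element $i$. Path $i$ has known elevation/azimuth angle-of-departure $\theta_i,\phi_i$ and elevation/azimuth angle-of-arrival $\vartheta_i,\varphi_i$, which are functions of $\boldsymbol{q}_{1:2}$ given by $\vartheta_i=\arctan\big(\|\boldsymbol{q}_{1:2}-\boldsymbol{s}^i_{1:2}\|_2/s^i_z\big)$ and $\varphi_i=\arccos\big(-|q_x-s^i_x|/\|\boldsymbol{q}_{1:2}-\boldsymbol{s}^i_{1:2}\|_2\big)$ (assumed differentiable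 at the true $\boldsymbol{q}_{1:2}$). Let $k=2\pi d/\lambda$ ($d$ antenna spacing, $\lambda$ wavelength), $\xi_i=k\sin\vartheta_i\sin\varphi_i$, $\zeta_i=k\sin\theta_i\sin\phi_i$, $\mathbf{a}_{\mathrm{t}}(\theta_i,\phi_i)=[e^{j(n-1)\zeta_i}]_{n=1}^{N_{\mathrm{t}}}$, $\mathbf{a}_{\mathrm{r}}(\vartheta_i,\varphi_i)=[e^{j(m-1)\xi_i}]_{m=1}^{N_{\mathrm{r}}}$, $\mathbf{\Lambda}_{\mathrm{t}}=[\mathbf{a}_{\mathrm{t}}(\theta_1,\phi_1),\dots,\mathbf{a}_{\mathrm{t}}(\theta_N,\phi_N)]$, $\mathbf{\Lambda}_{\mathrm{r}}=[\mathbf{a}_{\mathrm{r}}(\vartheta_1,\varphi_1),\dots,\mathbf{a}_{\mathrm{r}}(\vartheta_N,\varphi_N)]$. The channel is $\tilde{\mathbf{H}}=\mathbf{\Lambda}_{\mathrm{r}}\,\mathrm{diag}(h_1,\dots,h_N)\,\mathrm{diag}(e^{j\varrho_1},\dots,e^{j\varrho_N})\,\mathbf{\Lambda}_{\mathrm{t}}^{\mathrm{H}}$. In time slot $l=1,\dots,L$ the MS receives $\boldsymbol{y}(l)=\tilde{\mathbf{H}}\boldsymbol{x}(l)+\boldsymbol{n}$ with noise entries i.i.d. $\mathcal{CN}(0,\sigma^2)$; write $\boldsymbol{\mu}(l)=\tilde{\mathbf{H}}\boldsymbol{x}(l)$. The unknown parameter vector is $\boldsymbol{\eta}=[\vartheta_1,\dots,\vartheta_N,\varphi_1,\dots,\varphi_N,h_1,\dots,h_N]^{\mathrm{T}}$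 and its Fisher information matrix is $[\mathbf{J}_{\boldsymbol{\eta}}]_{m,n}=\sum_{l=1}^{L}\frac{2}{\sigma^2}\mathfrak{Re}\big\{\frac{\partial\boldsymbol{\mu}^{\mathrm{H}}(l)}{\partial\eta_m}\frac{\partial\boldsymbol{\mu}(l)}{\partial\eta_n}\big\}$. The transformation matrix is $\mathbf{T}=\partial\boldsymbol{\eta}^{\mathrm{T}}/\partial\boldsymbol{q}_{1:2}\in\mathbb{R}^{2\times 3N}$, where the gains $h_i$ do not depend on $\boldsymbol{q}$ (so $\partial h_i/\partial\boldsymbol{q}_{1:2}=0$). Notation: $\alpha_i^x=\partial\vartheta_i/\partial q_x$, $\alpha_i^y=\partial\vartheta_i/\partial q_y$, $\beta_i^x=\partial\varphi_i/\partial q_x$, $\beta_i^y=\partial\varphi_i/\partial q_y$. Define $N_{\mathrm{r}}\times N_{\mathrm{t}}$ matrices $[\dot{\boldsymbol{\Xi}}_i]_{m,n}=h_i\,j(m-1)k\sin\varphi_i\cos\vartheta_i\,e^{j[(m-1)\xi_i+(1-n)\zeta_i]}$ and $[\ddot{\boldsymbol{\Xi}}_i]_{m,n}=h_i\,j(m-1)k\sin\vartheta_i\cos\varphi_i\,e^{j[(m-1)\xi_i+(1-n)\zeta_i]}$, and vectors $\dot{\boldsymbol{\varpi}}_i(l)=\dot{\boldsymbol{\Xi}}_i\boldsymbol{x}(l)$, $\ddot{\boldsymbol{\varpi}}_i(l)=\ddot{\boldsymbol{\Xi}}_i\boldsymbol{x}(l)$. The CRLB for the MS position estimate is defined as $\mathrm{Tr}(\mathbf{J}_{\boldsymbol{q}}^{-1})$.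 *)

theory Defs
  imports "HOL-Analysis.Analysis"
begin

text \<open>Conventions: antennas, paths, time slots and FIM indices are 1-based natural numbers.
  Vectors in C^K are functions nat => complex used on indices 1..K.\<close>

text \<open>Angles of arrival as functions of the MS position q = (qx, qy); RIS element i
  is at (sx i, sy i, sz i).\<close>
definition vtheta :: "(nat \<Rightarrow> real) \<Rightarrow> (nat \<Rightarrow> real) \<Rightarrow> (nat \<Rightarrow> real) \<Rightarrow> nat \<Rightarrow> real \<times> real \<Rightarrow> real" where
  "vtheta sx sy sz i q = arctan (sqrt ((fst q - sx i)^2 + (snd q - sy i)^2) / sz i)"

definition vphi :: "(nat \<Rightarrow> real) \<Rightarrow> (nat \<Rightarrow> real) \<Rightarrow> (nat \<Rightarrow> real) \<Rightarrow> nat \<Rightarrow> real \<times> real \<Rightarrow> real" where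
  "vphi sx sy sz i q = arccos (- \<bar>fst q - sx i\<bar> / sqrt ((fst q - sx i)^2 + (snd q - sy i)^2))"

definition pderiv2 :: "nat \<Rightarrow> (real \<times> real \<Rightarrow> real) \<Rightarrow> real \<times> real \<Rightarrow> real" where
  "pderiv2 a f q = (if a = 1 then deriv (\<lambda>t. f (t, snd q)) (fst q)
                    else deriv (\<lambda>t. f (fst q, t)) (snd q))"

definition cexpj :: "real \<Rightarrow> complex" where
  "cexpj t = exp (\<i> * complex_of_real t)"

text \<open>Noise-free received signal mu(l), component m, as a function of the
  unknown parameters (vt = varthetas, vp = varphis, h = gains).\<close>
definition mu ::
  "real \<Rightarrow> nat \<Rightarrow> nat \<Rightarrow> (nat \<Rightarrow> real) \<Rightarrow> (nat \<Rightarrow> real) \<Rightarrow> (nat \<Rightarrow> real) \<Rightarrow>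
   (nat \<Rightarrow> nat \<Rightarrow> complex) \<Rightarrow> (nat \<Rightarrow> real) \<Rightarrow> (nat \<Rightarrow> real) \<Rightarrow> (nat \<Rightarrow> complex) \<Rightarrow>
   nat \<Rightarrow> nat \<Rightarrow> complex" where
  "mu k N Nt th ph rho x vt vp h l m =
     (\<Sum>n=1..Nt. (\<Sum>i=1..N.
        cexpj (real (m - 1) * (k * sin (vt i) * sin (vp i))) * h i * cexpj (rho i)
        * cnj (cexpj (real (n - 1) * (k * sin (th i) * sin (ph i))))) * x l n)"

text \<open>Partial derivative of mu(l)_m w.r.t. eta_p, where
  eta = [vartheta_1..vartheta_N, varphi_1..varphi_N, h_1..h_N]; derivatives w.r.t.
  the complex gains are complex derivatives.\<close>
definition dmu ::
  "real \<Rightarrow> nat \<Rightarrow> nat \<Rightarrow> (nat \<Rightarrow> real) \<Rightarrow> (nat \<Rightarrow> real) \<Rightarrow> (nat \<Rightarrow> real) \<Rightarrow>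
   (nat \<Rightarrow> nat \<Rightarrow> complex) \<Rightarrow> (nat \<Rightarrow> real) \<Rightarrow> (nat \<Rightarrow> real) \<Rightarrow> (nat \<Rightarrow> complex) \<Rightarrow>
   nat \<Rightarrow> nat \<Rightarrow> nat \<Rightarrow> complex" where
  "dmu k N Nt th ph rho x vt vp h p l m =
     (if p \<le> N then
        vector_derivative (\<lambda>t. mu k N Nt th ph rho x (vt(p := t)) vp h l m) (at (vt p))
      else if p \<le> 2 * N then
        vector_derivative (\<lambda>t. mu k N Nt th ph rho x vt (vp((p - N) := t)) h l m) (at (vp (p - N)))
      else
        deriv (\<lambda>z. mu k N Nt th ph rho x vt vp (h((p - 2 * N) := z)) l m) (h (p - 2 * N)))"

definition Jeta ::
  "real \<Rightarrow> nat \<Rightarrow> nat \<Rightarrow> nat \<Rightarrow> nat \<Rightarrow> real \<Rightarrow> (nat \<Rightarrow> real) \<Rightarrow> (nat \<Rightarrow> real) \<Rightarrow> (nat \<Rightarrow> real) \<Rightarrow>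
   (nat \<Rightarrow> nat \<Rightarrow> complex) \<Rightarrow> (nat \<Rightarrow> real) \<Rightarrow> (nat \<Rightarrow> real) \<Rightarrow> (nat \<Rightarrow> complex) \<Rightarrow>
   nat \<Rightarrow> nat \<Rightarrow> real" where
  "Jeta k N Nt Nr L sigma2 th ph rho x vt vp h p p' =
     (\<Sum>l=1..L. 2 / sigma2 * Re (\<Sum>m=1..Nr.
        cnj (dmu k N Nt th ph rho x vt vp h p l m) * dmu k N Nt th ph rho x vt vp h p' l m))"

definition Tmat ::
  "nat \<Rightarrow> (nat \<Rightarrow> real) \<Rightarrow> (nat \<Rightarrow> real) \<Rightarrow> (nat \<Rightarrow> real) \<Rightarrow> real \<times> real \<Rightarrow> nat \<Rightarrow> nat \<Rightarrow> real" where
  "Tmat N sx sy sz q a p =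
     (if p \<le> N then pderiv2 a (vtheta sx sy sz p) q
      else if p \<le> 2 * N then pderiv2 a (vphi sx sy sz (p - N)) q
      else 0)"

definition idx2 :: "2 \<Rightarrow> nat" where
  "idx2 a = (if a = 1 then 1 else 2)"

definition Jq ::
  "real \<Rightarrow> nat \<Rightarrow> nat \<Rightarrow> nat \<Rightarrow> nat \<Rightarrow> real \<Rightarrow> (nat \<Rightarrow> real) \<Rightarrow> (nat \<Rightarrow> real) \<Rightarrow> (nat \<Rightarrow> real) \<Rightarrow>
   (nat \<Rightarrow> nat \<Rightarrow> complex) \<Rightarrow> (nat \<Rightarrow> real) \<Rightarrow> (nat \<Rightarrow> real) \<Rightarrow> (nat \<Rightarrow> real) \<Rightarrow>
   (nat \<Rightarrow> complex) \<Rightarrow> real \<times> real \<Rightarrow> real^2^2" where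
  "Jq k N Nt Nr L sigma2 th ph rho x sx sy sz h q =
     (\<chi> a b. (\<Sum>p=1..3*N. \<Sum>p'=1..3*N.
          Tmat N sx sy sz q (idx2 a) p
          * Jeta k N Nt Nr L sigma2 th ph rho x
              (\<lambda>i. vtheta sx sy sz i q) (\<lambda>i. vphi sx sy sz i q) h p p'
          * Tmat N sx sy sz q (idx2 b) p'))"

definition XiDot ::
  "real \<Rightarrow> (nat \<Rightarrow> real) \<Rightarrow> (nat \<Rightarrow> real) \<Rightarrow> (nat \<Rightarrow> real) \<Rightarrow> (nat \<Rightarrow> real) \<Rightarrow> (nat \<Rightarrow> complex) \<Rightarrow>
   nat \<Rightarrow> nat \<Rightarrow> nat \<Rightarrow> complex" where
  "XiDot k th ph vt vp h i m n =
     h i * \<i> * complex_of_real (real (m - 1) * k * sin (vp i) * cos (vt i))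
     * cexpj (real (m - 1) * (k * sin (vt i) * sin (vp i))
              + (1 - real n) * (k * sin (th i) * sin (ph i)))"

definition XiDDot ::
  "real \<Rightarrow> (nat \<Rightarrow> real) \<Rightarrow> (nat \<Rightarrow> real) \<Rightarrow> (nat \<Rightarrow> real) \<Rightarrow> (nat \<Rightarrow> real) \<Rightarrow> (nat \<Rightarrow> complex) \<Rightarrow>
   nat \<Rightarrow> nat \<Rightarrow> nat \<Rightarrow> complex" where
  "XiDDot k th ph vt vp h i m n =
     h i * \<i> * complex_of_real (real (m - 1) * k * sin (vt i) * cos (vp i))
     * cexpj (real (m - 1) * (k * sin (vt i) * sin (vp i))
              + (1 - real n) * (k * sin (th i) * sin (ph i)))"

definition matvec :: "nat \<Rightarrow> (nat \<Rightarrow> nat \<Rightarrow> complex) \<Rightarrow> (nat \<Rightarrow> complex) \<Rightarrow> nat \<Rightarrow> complex" where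
  "matvec Nt A v m = (\<Sum>n=1..Nt. A m n * v n)"

definition hinner :: "nat \<Rightarrow> (nat \<Rightarrow> complex) \<Rightarrow> (nat \<Rightarrow> complex) \<Rightarrow> complex" where
  "hinner Nr u v = (\<Sum>r=1..Nr. cnj (u r) * v r)"

end

theory Submission
  imports Defs
begin

lemma dcexpj:
  assumes "(u has_real_derivative u') (at t)"
  shows "((\<lambda>t. cexpj (u t)) has_vector_derivative (\<i> * of_real u' * cexpj (u t))) (at t)"
proof -
  have f: "((\<lambda>t. \<i> * of_real (u t)) has_vector_derivative (\<i> * of_real u')) (at t)"
    using assms by (auto intro!: derivative_eq_intros)
  have "((exp \<circ> (\<lambda>t. \<i> * of_real (u t))) has_vector_derivative ((\<i> * of_real u') * exp (\<i> * of_real (u t)))) (at t)"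
    by (rule field_vector_diff_chain_at[OF f]) (rule DERIV_exp)
  then show ?thesis by (simp add: cexpj_def o_def)
qed

lemma dE:
  "((\<lambda>t. cexpj (c * (k * sin t * s)) * C) has_vector_derivative
     (\<i> * of_real (c * k * cos t0 * s) * cexpj (c * (k * sin t0 * s)) * C)) (at t0)"
proof -
  have "((\<lambda>t. c * (k * sin t * s)) has_real_derivative (c * k * cos t0 * s)) (at t0)"
    by (auto intro!: derivative_eq_intros)
  from has_vector_derivative_mult[OF dcexpj[OF this] has_vector_derivative_const[of C]]
  show ?thesis by simp
qed

lemma dE2:
  "((\<lambda>t. cexpj (c * (k * s * sin t)) * C) has_vector_derivative
     (\<i> * of_real (c * k * s * cos t0) * cexpj (c * (k * s * sin t0)) * C)) (at t0)"
proof -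
  have "((\<lambda>t. c * (k * s * sin t)) has_real_derivative (c * k * s * cos t0)) (at t0)"
    by (auto intro!: derivative_eq_intros)
  from has_vector_derivative_mult[OF dcexpj[OF this] has_vector_derivative_const[of C]]
  show ?thesis by simp
qed

lemma cexpj_add: "cexpj a * cexpj b = cexpj (a + b)"
  by (simp add: cexpj_def exp_add[symmetric] algebra_simps)
lemma cnj_cexpj: "cnj (cexpj a) = cexpj (- a)"
  by (simp add: cexpj_def exp_cnj)

lemma dmu_vt:
  assumes p: "p \<in> {1..N}"
  shows "dmu k N Nt th ph rho x vt vp h p l m = cexpj (rho p) * matvec Nt (XiDot k th ph vt vp h p) (x l) m"
proof -
  define D where "D n i = (if i = p then \<i> * of_real (real (m - 1) * k * cos (vt p) * sin (vp p))
      * cexpj (real (m - 1) * (k * sin (vt p) * sin (vp p)))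
      * (h p * cexpj (rho p) * cnj (cexpj (real (n - 1) * (k * sin (th p) * sin (ph p))))) else 0)" for n i
  have "((\<lambda>t. mu k N Nt th ph rho x (vt(p := t)) vp h l m) has_vector_derivative
     (\<Sum>n=1..Nt. (\<Sum>i=1..N. D n i) * x l n)) (at (vt p))"
    unfolding mu_def
  proof (intro has_vector_derivative_sum has_vector_derivative_mult[where g'=0, simplified])
    fix n i
    show "((\<lambda>t. x l n) has_vector_derivative 0) (at (vt p))" by (rule has_vector_derivative_const)
    show "((\<lambda>t. cexpj (real (m - 1) * (k * sin ((vt(p := t)) i) * sin (vp i))) * h i * cexpj (rho i) *
           cnj (cexpj (real (n - 1) * (k * sin (th i) * sin (ph i))))) has_vector_derivative D n i) (at (vt p))"
    proof (cases "i = p")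
      case True
      then show ?thesis unfolding D_def
        using dE[of "real (m - 1)" k "sin (vp p)" "h p * cexpj (rho p) * cnj (cexpj (real (n - 1) * (k * sin (th p) * sin (ph p))))" "vt p"]
        by (simp add: mult.assoc)
    next
      case False
      then show ?thesis unfolding D_def by (simp add: has_vector_derivative_const)
    qed
  qed
  then have "dmu k N Nt th ph rho x vt vp h p l m = (\<Sum>n=1..Nt. (\<Sum>i=1..N. D n i) * x l n)"
    using p unfolding dmu_def by (simp add: vector_derivative_at)
  also have "\<dots> = cexpj (rho p) * matvec Nt (XiDot k th ph vt vp h p) (x l) m"
    unfolding matvec_def sum_distrib_left
  proof (rule sum.cong[OF refl])
    fix n assume n: "n \<in> {1..Nt}"
    have s1: "(\<Sum>i=1..N. D n i) = D n p" unfolding D_def using p by simp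
    have e: "cexpj (real (m - 1) * (k * sin (vt p) * sin (vp p))) * cnj (cexpj (real (n - 1) * (k * sin (th p) * sin (ph p))))
      = cexpj (real (m - 1) * (k * sin (vt p) * sin (vp p)) + (1 - real n) * (k * sin (th p) * sin (ph p)))"
      unfolding cnj_cexpj cexpj_add using n by (simp add: of_nat_diff algebra_simps)
    have dd: "D n p * x l n = cexpj (rho p) * (h p * \<i> * of_real (real (m - 1) * k * sin (vp p) * cos (vt p))) * 
       (cexpj (real (m - 1) * (k * sin (vt p) * sin (vp p))) * cnj (cexpj (real (n - 1) * (k * sin (th p) * sin (ph p))))) * x l n"
      unfolding D_def by (simp add: mult_ac)
    have "D n p * x l n = cexpj (rho p) * (XiDot k th ph vt vp h p m n * x l n)"
      unfolding XiDot_def e[symmetric] dd by (simp add: mult_ac)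
    then show "(\<Sum>i=1..N. D n i) * x l n = cexpj (rho p) * (XiDot k th ph vt vp h p m n * x l n)" using s1 by simp
  qed
  finally show ?thesis .
qed

lemma dmu_vp:
  assumes p: "p \<in> {1..N}"
  shows "dmu k N Nt th ph rho x vt vp h (N + p) l m = cexpj (rho p) * matvec Nt (XiDDot k th ph vt vp h p) (x l) m"
proof -
  define D where "D n i = (if i = p then \<i> * of_real (real (m - 1) * k * sin (vt p) * cos (vp p))
      * cexpj (real (m - 1) * (k * sin (vt p) * sin (vp p)))
      * (h p * cexpj (rho p) * cnj (cexpj (real (n - 1) * (k * sin (th p) * sin (ph p))))) else 0)" for n i
  have "((\<lambda>t. mu k N Nt th ph rho x vt (vp(p := t)) h l m) has_vector_derivative
     (\<Sum>n=1..Nt. (\<Sum>i=1..N. D n i) * x l n)) (at (vp p))"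
    unfolding mu_def
  proof (intro has_vector_derivative_sum has_vector_derivative_mult[where g'=0, simplified])
    fix n i
    show "((\<lambda>t. x l n) has_vector_derivative 0) (at (vp p))" by (rule has_vector_derivative_const)
    show "((\<lambda>t. cexpj (real (m - 1) * (k * sin (vt i) * sin ((vp(p := t)) i))) * h i * cexpj (rho i) *
           cnj (cexpj (real (n - 1) * (k * sin (th i) * sin (ph i))))) has_vector_derivative D n i) (at (vp p))"
    proof (cases "i = p")
      case True
      then show ?thesis unfolding D_def
        using dE2[of "real (m - 1)" k "sin (vt p)" "h p * cexpj (rho p) * cnj (cexpj (real (n - 1) * (k * sin (th p) * sin (ph p))))" "vp p"]
        by (simp add: mult.assoc)
    next
      case False
      then show ?thesis unfolding D_def by (simp add: has_vector_derivative_const)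
    qed
  qed
  then have "dmu k N Nt th ph rho x vt vp h (N + p) l m = (\<Sum>n=1..Nt. (\<Sum>i=1..N. D n i) * x l n)"
    using p unfolding dmu_def by (simp add: vector_derivative_at)
  also have "\<dots> = cexpj (rho p) * matvec Nt (XiDDot k th ph vt vp h p) (x l) m"
    unfolding matvec_def sum_distrib_left
  proof (rule sum.cong[OF refl])
    fix n assume n: "n \<in> {1..Nt}"
    have s1: "(\<Sum>i=1..N. D n i) = D n p" unfolding D_def using p by simp
    have e: "cexpj (real (m - 1) * (k * sin (vt p) * sin (vp p))) * cnj (cexpj (real (n - 1) * (k * sin (th p) * sin (ph p))))
      = cexpj (real (m - 1) * (k * sin (vt p) * sin (vp p)) + (1 - real n) * (k * sin (th p) * sin (ph p)))"
      unfolding cnj_cexpj cexpj_add using n by (simp add: of_nat_diff algebra_simps)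
    have dd: "D n p * x l n = cexpj (rho p) * (h p * \<i> * of_real (real (m - 1) * k * sin (vt p) * cos (vp p))) * 
       (cexpj (real (m - 1) * (k * sin (vt p) * sin (vp p))) * cnj (cexpj (real (n - 1) * (k * sin (th p) * sin (ph p))))) * x l n"
      unfolding D_def by (simp add: mult_ac)
    have "D n p * x l n = cexpj (rho p) * (XiDDot k th ph vt vp h p m n * x l n)"
      unfolding XiDDot_def e[symmetric] dd by (simp add: mult_ac)
    then show "(\<Sum>i=1..N. D n i) * x l n = cexpj (rho p) * (XiDDot k th ph vt vp h p m n * x l n)" using s1 by simp
  qed
  finally show ?thesis .
qed


lemma trace_inv2:
  fixes J :: "real^2^2"
  assumes "invertible J"
  shows "trace (matrix_inv J) = (J $ 1 $ 1 + J $ 2 $ 2) / (J $ 1 $ 1 * J $ 2 $ 2 - J $ 1 $ 2 * J $ 2 $ 1)"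
proof -
  define d where "d = J $ 1 $ 1 * J $ 2 $ 2 - J $ 1 $ 2 * J $ 2 $ 1"
  have d0: "d \<noteq> 0" using invertible_det_nz[of J] assms det_2[of J] d_def by simp
  define M :: "real^2^2" where "M = (\<chi> i j. (if i = 1 \<and> j = 1 then J $ 2 $ 2 else if i = 2 \<and> j = 2 then J $ 1 $ 1
       else - J $ i $ j) / d)"
  have d0': "J $ 1 $ 1 * J $ 2 $ 2 - J $ 1 $ 2 * J $ 2 $ 1 \<noteq> 0" using d0 d_def by simp
  have Mleft: "M ** J = mat 1"
    unfolding matrix_matrix_mult_def M_def mat_def d_def
    using d0' by (simp add: vec_eq_iff forall_2 sum_2 divide_simps)
  have "J ** matrix_inv J = mat 1 \<and> matrix_inv J ** J = mat 1"
    using assms unfolding invertible_def matrix_inv_def by (rule someI_ex)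
  then have R: "J ** matrix_inv J = mat 1" by simp
  have "matrix_inv J = (M ** J) ** matrix_inv J" by (simp add: Mleft matrix_mul_lid)
  also have "\<dots> = M" by (simp only: matrix_mul_assoc[symmetric] R matrix_mul_rid)
  finally show ?thesis unfolding trace_def M_def using d0
    by (simp add: sum_2 d_def add_divide_distrib)
qed

lemma sum3:
  fixes f :: "nat \<Rightarrow> 'a::comm_monoid_add"
  shows "(\<Sum>p=1..3*N. f p) = (\<Sum>i=1..N. f i) + (\<Sum>i=1..N. f (N + i)) + (\<Sum>i=1..N. f (2 * N + i))"
proof -
  have e: "3 * N = N + (N + N)" by simp
  have "(\<Sum>p=1..3*N. f p) = (\<Sum>p=1..N. f p) + (\<Sum>p=N+1..N+(N+N). f p)"
    unfolding e by (rule sum.ub_add_nat) simp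
  also have "(\<Sum>p=N+1..N+(N+N). f p) = (\<Sum>p=N+1..N+N. f p) + (\<Sum>p=N+N+1..N+N+N. f p)"
    using sum.ub_add_nat[of "N+1" "N+N" f N] by (simp add: add.assoc)
  also have "(\<Sum>p=N+1..N+N. f p) = (\<Sum>i=1..N. f (N + i))"
    using sum.shift_bounds_cl_nat_ivl[of f 1 N N] by (simp add: add.commute)
  also have "(\<Sum>p=N+N+1..N+N+N. f p) = (\<Sum>i=1..N. f (2 * N + i))"
    using sum.shift_bounds_cl_nat_ivl[of f 1 "N+N" N] by (simp add: add.commute mult_2)
  finally show ?thesis by (simp add: add.assoc)
qed

lemma L1:
  fixes f g :: "'i \<Rightarrow> 'r \<Rightarrow> complex"
  assumes "finite R" "finite I" "finite J"
  shows "Re (\<Sum>r\<in>R. cnj (\<Sum>i\<in>I. f i r) * (\<Sum>j\<in>J. g j r)) = (\<Sum>i\<in>I. \<Sum>j\<in>J. Re (\<Sum>r\<in>R. cnj (f i r) * g j r))"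
proof -
  have "(\<Sum>r\<in>R. cnj (\<Sum>i\<in>I. f i r) * (\<Sum>j\<in>J. g j r)) = (\<Sum>r\<in>R. \<Sum>i\<in>I. \<Sum>j\<in>J. cnj (f i r) * g j r)"
    by (simp add: cnj_sum sum_product)
  also have "\<dots> = (\<Sum>i\<in>I. \<Sum>r\<in>R. \<Sum>j\<in>J. cnj (f i r) * g j r)" by (rule sum.swap)
  also have "\<dots> = (\<Sum>i\<in>I. \<Sum>j\<in>J. \<Sum>r\<in>R. cnj (f i r) * g j r)" by (simp add: sum.swap[of _ R])
  finally show ?thesis by (simp add: Re_sum)
qed

lemma entry:
  fixes k sigma2 :: real and N Nt Nr L A B :: nat
    and th ph rho sx sy sz :: "nat \<Rightarrow> real"
    and h :: "nat \<Rightarrow> complex" and x :: "nat \<Rightarrow> nat \<Rightarrow> complex"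
    and q :: "real \<times> real"
  defines "vt \<equiv> (\<lambda>i. vtheta sx sy sz i q)" and "vp \<equiv> (\<lambda>i. vphi sx sy sz i q)"
    and "al \<equiv> (\<lambda>a i. pderiv2 a (vtheta sx sy sz i) q)"
    and "be \<equiv> (\<lambda>a i. pderiv2 a (vphi sx sy sz i) q)"
    and "wD \<equiv> (\<lambda>i l. matvec Nt (XiDot k th ph (\<lambda>i. vtheta sx sy sz i q) (\<lambda>i. vphi sx sy sz i q) h i) (x l))"
    and "wDD \<equiv> (\<lambda>i l. matvec Nt (XiDDot k th ph (\<lambda>i. vtheta sx sy sz i q) (\<lambda>i. vphi sx sy sz i q) h i) (x l))"
  shows "(\<Sum>p=1..3*N. \<Sum>p'=1..3*N. Tmat N sx sy sz q A p
            * Jeta k N Nt Nr L sigma2 th ph rho x vt vp h p p' * Tmat N sx sy sz q B p')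
       = (\<Sum>l=1..L. 2 / sigma2 * (\<Sum>m=1..N. \<Sum>n=1..N.
               Re (cexpj (rho n - rho m) * (
              complex_of_real (al A m * al B n) * hinner Nr (wD m l) (wD n l)
            + complex_of_real (be A m * al B n) * hinner Nr (wDD m l) (wD n l)
            + complex_of_real (al A m * be B n) * hinner Nr (wD m l) (wDD n l)
            + complex_of_real (be A m * be B n) * hinner Nr (wDD m l) (wDD n l)))))"
proof -
  define T where "T a p = Tmat N sx sy sz q a p" for a p
  define d where "d p l m = dmu k N Nt th ph rho x vt vp h p l m" for p l m
  define G where "G a p l m = complex_of_real (T a p) * d p l m" for a p l m
  define S where "S a i l m = cexpj (rho i) * (complex_of_real (al a i) * wD i l m + complex_of_real (be a i) * wDD i l m)" for a i l m
  have stepA: "T A p * Jeta k N Nt Nr L sigma2 th ph rho x vt vp h p p' * T B p'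
     = (\<Sum>l=1..L. 2 / sigma2 * Re (\<Sum>m=1..Nr. cnj (G A p l m) * G B p' l m))" for p p'
  proof -
    have "(\<Sum>m=1..Nr. cnj (G A p l m) * G B p' l m) = complex_of_real (T A p * T B p') * (\<Sum>m=1..Nr. cnj (d p l m) * d p' l m)" for l
      unfolding G_def by (simp add: sum_distrib_left mult_ac)
    then show ?thesis unfolding Jeta_def d_def
      by (simp add: sum_distrib_left sum_distrib_right mult_ac)
  qed
  have stepB: "(\<Sum>p=1..3*N. \<Sum>p'=1..3*N. T A p * Jeta k N Nt Nr L sigma2 th ph rho x vt vp h p p' * T B p')
     = (\<Sum>l=1..L. 2 / sigma2 * Re (\<Sum>m=1..Nr. cnj (\<Sum>p=1..3*N. G A p l m) * (\<Sum>p'=1..3*N. G B p' l m)))"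
  proof -
    have "(\<Sum>l=1..L. 2 / sigma2 * Re (\<Sum>m=1..Nr. cnj (\<Sum>p=1..3*N. G A p l m) * (\<Sum>p'=1..3*N. G B p' l m)))
      = (\<Sum>l=1..L. \<Sum>p=1..3*N. \<Sum>p'=1..3*N. 2 / sigma2 * Re (\<Sum>m=1..Nr. cnj (G A p l m) * G B p' l m))"
      unfolding L1[OF finite_atLeastAtMost finite_atLeastAtMost finite_atLeastAtMost]
      by (simp only: sum_distrib_left)
    also have "\<dots> = (\<Sum>p=1..3*N. \<Sum>l=1..L. \<Sum>p'=1..3*N. 2 / sigma2 * Re (\<Sum>m=1..Nr. cnj (G A p l m) * G B p' l m))"
      by (rule sum.swap)
    also have "\<dots> = (\<Sum>p=1..3*N. \<Sum>p'=1..3*N. \<Sum>l=1..L. 2 / sigma2 * Re (\<Sum>m=1..Nr. cnj (G A p l m) * G B p' l m))"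
      by (rule sum.cong[OF refl], rule sum.swap)
    finally show ?thesis unfolding stepA by simp
  qed
  have stepC: "(\<Sum>p=1..3*N. G a p l m) = (\<Sum>i=1..N. S a i l m)" for a l m
  proof -
    have "G a i l m + G a (N + i) l m + G a (2 * N + i) l m = S a i l m" if i: "i \<in> {1..N}" for i
    proof -
      have "G a i l m = complex_of_real (al a i) * (cexpj (rho i) * wD i l m)"
        using i unfolding G_def T_def Tmat_def d_def wD_def al_def vt_def vp_def
        by (simp add: dmu_vt[OF i])
      moreover have "G a (N + i) l m = complex_of_real (be a i) * (cexpj (rho i) * wDD i l m)"
        using i unfolding G_def T_def Tmat_def d_def wDD_def be_def vt_def vp_def
        by (simp add: dmu_vp[OF i])
      moreover have "G a (2 * N + i) l m = 0"
        using i unfolding G_def T_def Tmat_def by simp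
      ultimately show ?thesis unfolding S_def by (simp add: algebra_simps)
    qed
    then show ?thesis unfolding sum3 by (simp add: sum.distrib[symmetric])
  qed
  have stepD: "(\<Sum>r=1..Nr. cnj (S A i l r) * S B j l r) = cexpj (rho j - rho i) * (
              complex_of_real (al A i * al B j) * hinner Nr (wD i l) (wD j l)
            + complex_of_real (be A i * al B j) * hinner Nr (wDD i l) (wD j l)
            + complex_of_real (al A i * be B j) * hinner Nr (wD i l) (wDD j l)
            + complex_of_real (be A i * be B j) * hinner Nr (wDD i l) (wDD j l))" for i j l
  proof -
    have c: "cnj (cexpj (rho i)) * cexpj (rho j) = cexpj (rho j - rho i)"
      by (simp add: cnj_cexpj cexpj_add)
    show ?thesis unfolding S_def hinner_def c[symmetric]
      by (simp add: sum_distrib_left sum.distrib[symmetric] algebra_simps)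
  qed
  show ?thesis
    unfolding T_def[symmetric] stepB stepC L1[OF finite_atLeastAtMost finite_atLeastAtMost finite_atLeastAtMost] stepD
    by (rule refl)
qed
theorem mainTheorem1:
  fixes k sigma2 :: real and N Nt Nr L :: nat
    and th ph rho sx sy sz :: "nat \<Rightarrow> real"
    and h :: "nat \<Rightarrow> complex" and x :: "nat \<Rightarrow> nat \<Rightarrow> complex"
    and q :: "real \<times> real"
  assumes sigma_pos: "sigma2 > 0"
    and sz_pos: "\<forall>i\<in>{1..N}. sz i > 0"
    and rho_range: "\<forall>i\<in>{1..N}. rho i \<in> {0..2 * pi}"
    and diff_vtheta: "\<forall>i\<in>{1..N}. vtheta sx sy sz i differentiable (at q)"
    and diff_vphi: "\<forall>i\<in>{1..N}. vphi sx sy sz i differentiable (at q)"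
    and nonsing: "invertible (Jq k N Nt Nr L sigma2 th ph rho x sx sy sz h q)"
  shows
    "(let J = Jq k N Nt Nr L sigma2 th ph rho x sx sy sz h q;
          vt = (\<lambda>i. vtheta sx sy sz i q);
          vp = (\<lambda>i. vphi sx sy sz i q);
          alpha = (\<lambda>a i. pderiv2 a (vtheta sx sy sz i) q);
          beta = (\<lambda>a i. pderiv2 a (vphi sx sy sz i) q);
          wD = (\<lambda>i l. matvec Nt (XiDot k th ph vt vp h i) (x l));
          wDD = (\<lambda>i l. matvec Nt (XiDDot k th ph vt vp h i) (x l));
          kappa = (\<lambda>a b m n l.
              complex_of_real (alpha a m * alpha b n) * hinner Nr (wD m l) (wD n l)
            + complex_of_real (beta a m * alpha b n) * hinner Nr (wDD m l) (wD n l)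
            + complex_of_real (alpha a m * beta b n) * hinner Nr (wD m l) (wDD n l)
            + complex_of_real (beta a m * beta b n) * hinner Nr (wDD m l) (wDD n l))
      in (\<forall>a b :: 2. J $ a $ b =
            (\<Sum>l=1..L. 2 / sigma2 * (\<Sum>m=1..N. \<Sum>n=1..N.
               Re (cexpj (rho n - rho m) * kappa (idx2 a) (idx2 b) m n l))))
       \<and> trace (matrix_inv J) =
           (J $ 1 $ 1 + J $ 2 $ 2) / (J $ 1 $ 1 * J $ 2 $ 2 - J $ 1 $ 2 * J $ 2 $ 1))"
  proof -
  have A: "Jq k N Nt Nr L sigma2 th ph rho x sx sy sz h q $ a $ b =
    (\<Sum>p=1..3*N. \<Sum>p'=1..3*N. Tmat N sx sy sz q (idx2 a) p
          * Jeta k N Nt Nr L sigma2 th ph rho x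
              (\<lambda>i. vtheta sx sy sz i q) (\<lambda>i. vphi sx sy sz i q) h p p'
          * Tmat N sx sy sz q (idx2 b) p')" for a b
    unfolding Jq_def by simp
  show ?thesis
    unfolding Let_def
    using trace_inv2[OF nonsing]
    by (simp only: A entry) simp
qed

end
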